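(* Let $d\in\{1,2,3,4,7\}$ and let $Q_d$, $R_d$, $\beta_d$ be as in the context. For a positive integer $h$ define $$\mathscr{T}_{d,h}=c_d\prod_{p\in R_d}W_{d,p}(h)\prod_{\substack{p\in Q_d\\ p\mid h}}\frac{1-p^{-(m_p(h)+1)}}{1-p^{-1}},$$ with $c_1=2$, $c_2=2\sqrt2$, $c_3=\frac{2}{\sqrt3}$, $c_4=2$, $c_7=\frac{2\sqrt7}{3}$, and $W_{1,2}(h)=\frac14$ if $m_2(h)=0$, $=\frac{2^{m_2(h)+1}-3}{2^{m_2(h)+2}}$ if $m_2(h)\ge1$; $W_{2,2}(h)=\frac14$ if $m_2(h)\in\{0,1\}$, $=\frac{2^{m_2(h)}-3}{2^{m_2(h)+1}}$ if $m_2(h)\ge2$; $W_{3,3}(h)=\frac12\cdot\frac{3^{m_3(h)+1}-2}{3^{m_3(h)+1}}$; $W_{4,2}(h)=\frac18,\,0,\,\frac{5}{16}$ for $m_2(h)=0,1,2$ respectively, and $=\frac{3\cdot2^{m_2(h)-1}-3}{2^{m_2(h)+2}}$ if $m_2(h)\ge3$; $W_{7,2}(h)=\frac12$ if $m_2(h)\in\{0,1\}$, $=\frac34$ if $m_2(h)\ge2$; $W_{7,7}(h)=\frac12\cdot\frac{7^{m_7(h)+1}-4}{7^{m_7(h)+1}}$. Then for every $\varepsilon>0$, as $H\to\infty$, $$\sum_{\substack{1\le d_1,d_2\le H\\ d_1\ne d_2}}\mathscr{T}_{d,|d_2-d_1|}=2\sum_{1\le h\le H-1}(H-h)\,\ma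thscr{T}_{d,h}=\beta_d^2H^2+O_\varepsilon(H^{1+\varepsilon}).$$
   Context: $m_p(h)$ is the exponent of the prime $p$ in $h$. Sets of primes: $Q_1=Q_4=\{p\equiv3\ (4)\}$, $Q_2=\{p\equiv5,7\ (8)\}$, $Q_3=\{p\equiv2\ (3)\}$ (including $2$), $Q_7=\{p\equiv3,5,6\ (7)\}$; $R_1=R_2=R_4=\{2\}$, $R_3=\{3\}$, $R_7=\{2,7\}$. The constant $\beta_d$ is $\beta_d=\delta_d\, g_d\left(\frac{2|d|\,L_d(1)}{\pi\,\varphi(2|d|)}\right)^{1/2}$ with $g_d=\prod_{p\in Q_d,\ p\ \mathrm{odd}}(1-p^{-2})^{-1/2}$, $\delta_1=\delta_2=1$, $\delta_3=\tfrac23$, $\delta_4=\delta_7=\tfrac34$, $\varphi$ Euler's totient, and $L_d(1)=\frac{\pi}{4},\frac{\pi}{2\sqrt2},\frac{\pi}{2\sqrt3},\frac{\pi}{4},\frac{\pi}{2\sqrt7}$ for $d=1,2,3,4,7$. Thus $\beta_d^2=\kappa_d\prod_{p\in Q_d,\,p\text{ odd}}(1-p^{-2})^{-1}$ with $\kappa_1=\frac12,\ \kappa_2=\frac{1}{\sqrt2},\ \kappa_3=\frac49\cdot\frac{\sqrt3}{2},\ \kappa_4=\frac{9}{16}\cdot\frac12,\ \kappa_7=\frac{9}{16}\cdot\frac{\sqrt7}{6}$. $\mathscr{T}_{d,h}$ is the conjectural pair-correlation singular series for integers of the form $x^2+dy^2$. *)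

theory Defs
  imports "HOL-Analysis.Analysis" "HOL-Library.Landau_Symbols"
    "HOL-Computational_Algebra.Primes" "HOL-Number_Theory.Totient"
begin

definition m_exp :: "nat \<Rightarrow> nat \<Rightarrow> nat" where
  "m_exp p h = multiplicity p h"

definition Q_set :: "nat \<Rightarrow> nat set" where
  "Q_set d = {p. prime p \<and>
     (if d = 1 \<or> d = 4 then p mod 4 = 3
      else if d = 2 then p mod 8 \<in> {5, 7}
      else if d = 3 then p mod 3 = 2
      else if d = 7 then p mod 7 \<in> {3, 5, 6}
      else False)}"

definition R_set :: "nat \<Rightarrow> nat set" where
  "R_set d = (if d = 1 \<or> d = 2 \<or> d = 4 then {2}
              else if d = 3 then {3}
              else if d = 7 then {2, 7}
              else {})"

definition c_const :: "nat \<Rightarrow> real" where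
  "c_const d = (if d = 1 then 2 else if d = 2 then 2 * sqrt 2
                else if d = 3 then 2 / sqrt 3 else if d = 4 then 2
                else if d = 7 then 2 * sqrt 7 / 3 else 0)"

definition W :: "nat \<Rightarrow> nat \<Rightarrow> nat \<Rightarrow> real" where
  "W d p h = (let m = m_exp p h in
     if d = 1 \<and> p = 2 then
       (if m = 0 then 1/4 else (2^(m+1) - 3) / 2^(m+2))
     else if d = 2 \<and> p = 2 then
       (if m \<le> 1 then 1/4 else (2^m - 3) / 2^(m+1))
     else if d = 3 \<and> p = 3 then
       1/2 * ((3^(m+1) - 2) / 3^(m+1))
     else if d = 4 \<and> p = 2 then
       (if m = 0 then 1/8 else if m = 1 then 0 else if m = 2 then 5/16
        else (3 * 2^(m-1) - 3) / 2^(m+2))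
     else if d = 7 \<and> p = 2 then
       (if m \<le> 1 then 1/2 else 3/4)
     else if d = 7 \<and> p = 7 then
       1/2 * ((7^(m+1) - 4) / 7^(m+1))
     else 0)"

definition T_series :: "nat \<Rightarrow> nat \<Rightarrow> real" where
  "T_series d h = c_const d * (\<Prod>p\<in>R_set d. W d p h) *
     (\<Prod>p\<in>{p \<in> Q_set d. p dvd h}.
        (1 - (real p) powi (- (int (m_exp p h) + 1))) / (1 - 1 / real p))"

definition L1 :: "nat \<Rightarrow> real" where
  "L1 d = (if d = 1 then pi / 4 else if d = 2 then pi / (2 * sqrt 2)
           else if d = 3 then pi / (2 * sqrt 3) else if d = 4 then pi / 4
           else if d = 7 then pi / (2 * sqrt 7) else 0)"

definition delta_const :: "nat \<Rightarrow> real" where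
  "delta_const d = (if d = 1 \<or> d = 2 then 1 else if d = 3 then 2/3
                    else if d = 4 \<or> d = 7 then 3/4 else 0)"

definition g_const :: "nat \<Rightarrow> real" where
  "g_const d = (\<Prod>p. if p \<in> Q_set d \<and> odd p then (1 - 1 / (real p)^2) powr (-1/2) else 1)"

definition beta_const :: "nat \<Rightarrow> real" where
  "beta_const d = delta_const d * g_const d *
     sqrt (2 * real d * L1 d / (pi * real (totient (2 * d))))"

end

theory Submission
  imports Defs "HOL-Real_Asymp.Real_Asymp"
begin


lemma sum_rev_shift:
  fixes \<phi> :: "nat \<Rightarrow> real"
  shows "(\<Sum>a=1..H. \<phi> (Suc H - a)) = (\<Sum>h=1..H. \<phi> h)"
  using sum.atLeastAtMost_rev[of "\<lambda>h. \<phi> h" 1 H] by simp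

lemma pair_sum:
  fixes \<phi> :: "nat \<Rightarrow> real"
  shows "(\<Sum>q\<in>{q \<in> {1..H} \<times> {1..H}. fst q \<noteq> snd q}. \<phi> (nat \<bar>int (snd q) - int (fst q)\<bar>))
     = 2 * (\<Sum>h = 1..H - 1. real (H - h) * \<phi> h)"
proof (induction H)
  case 0
  then show ?case by simp
next
  case (Suc H)
  define S where "S (H::nat) = {q \<in> {1..H} \<times> {1..H}. fst q \<noteq> snd q}" for H
  define A where "A = (\<lambda>a. (a, Suc H)) ` {1..H}"
  define B where "B = (\<lambda>b. (Suc H, b)) ` {1..H}"
  let ?f = "\<lambda>q. \<phi> (nat \<bar>int (snd q) - int (fst q)\<bar>)"
  have SS: "S (Suc H) = S H \<union> A \<union> B"
    unfolding S_def A_def B_def by (auto simp: le_Suc_eq)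
  have fin: "finite (S H)" "finite A" "finite B" unfolding S_def A_def B_def
    by (auto intro: finite_subset[of _ "{1..H} \<times> {1..H}"])
  have dis: "S H \<inter> A = {}" "(S H \<union> A) \<inter> B = {}" unfolding S_def A_def B_def by auto
  have sA: "sum ?f A = (\<Sum>h=1..H. \<phi> h)"
  proof -
    have "sum ?f A = (\<Sum>a=1..H. \<phi> (Suc H - a))"
      unfolding A_def by (subst sum.reindex) (auto simp: inj_on_def intro!: sum.cong arg_cong[where f=\<phi>])
    then show ?thesis using sum_rev_shift by simp
  qed
  have sB: "sum ?f B = (\<Sum>h=1..H. \<phi> h)"
  proof -
    have "sum ?f B = (\<Sum>a=1..H. \<phi> (Suc H - a))"
      unfolding B_def by (subst sum.reindex) (auto simp: inj_on_def intro!: sum.cong arg_cong[where f=\<phi>])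
    then show ?thesis using sum_rev_shift by simp
  qed
  have "sum ?f (S (Suc H)) = sum ?f (S H) + (\<Sum>h=1..H. \<phi> h) + (\<Sum>h=1..H. \<phi> h)"
    unfolding SS using fin dis sA sB by (simp add: sum.union_disjoint)
  also have "sum ?f (S H) = 2 * (\<Sum>h = 1..H - 1. real (H - h) * \<phi> h)"
    using Suc.IH unfolding S_def by simp
  also have "(\<Sum>h = 1..H - 1. real (H - h) * \<phi> h) = (\<Sum>h = 1..H. real (H - h) * \<phi> h)"
  proof (cases H)
    case (Suc k) then show ?thesis by (simp add: sum.cl_ivl_Suc)
  qed simp
  finally have "sum ?f (S (Suc H)) = 2 * ((\<Sum>h = 1..H. real (H - h) * \<phi> h) + (\<Sum>h=1..H. \<phi> h))"
    by simp
  also have "(\<Sum>h = 1..H. real (H - h) * \<phi> h) + (\<Sum>h=1..H. \<phi> h) = (\<Sum>h = 1..H. real (Suc H - h) * \<phi> h)"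
    by (subst sum.distrib[symmetric], rule sum.cong) (auto simp: of_nat_diff algebra_simps)
  finally show ?case unfolding S_def by simp
qed


definition ppow :: "nat set \<Rightarrow> (nat \<Rightarrow> nat) \<Rightarrow> nat" where
  "ppow P e = (\<Prod>p\<in>P. p ^ e p)"

definition mulf :: "(nat \<Rightarrow> nat \<Rightarrow> real) \<Rightarrow> nat \<Rightarrow> real" where
  "mulf \<gamma> k = (\<Prod>p\<in>prime_factors k. \<gamma> p (multiplicity p k))"

lemma ppow_pos:
  assumes "finite P" "\<And>p. p \<in> P \<Longrightarrow> prime p"
  shows "ppow P e > 0"
  unfolding ppow_def using assms by (auto intro!: prod_pos simp: prime_gt_0_nat)

lemma mult_ppow:
  assumes "finite P" "\<And>p. p \<in> P \<Longrightarrow> prime p" "prime q"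
  shows "multiplicity q (ppow P e) = (if q \<in> P then e q else 0)"
  unfolding ppow_def using multiplicity_prod_prime_powers[OF assms] .

lemma pf_ppow:
  assumes "finite P" "\<And>p. p \<in> P \<Longrightarrow> prime p"
  shows "prime_factors (ppow P e) \<subseteq> P"
proof
  fix q assume q: "q \<in> prime_factors (ppow P e)"
  then have "prime q" "multiplicity q (ppow P e) > 0"
    by (auto simp: prime_factors_multiplicity)
  then show "q \<in> P" using mult_ppow[OF assms \<open>prime q\<close>] by (auto split: if_splits)
qed

lemma ppow_bij:
  assumes "finite P" "\<And>p. p \<in> P \<Longrightarrow> prime p"
  shows "bij_betw (ppow P) (PiE P E)
     {k. k > 0 \<and> prime_factors k \<subseteq> P \<and> (\<forall>p\<in>P. multiplicity p k \<in> E p)}"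
proof (rule bij_betwI')
  fix e1 e2 assume e: "e1 \<in> PiE P E" "e2 \<in> PiE P E"
  show "(ppow P e1 = ppow P e2) = (e1 = e2)"
  proof
    assume eq: "ppow P e1 = ppow P e2"
    show "e1 = e2"
    proof (rule PiE_ext[OF e])
      fix q assume "q \<in> P"
      then show "e1 q = e2 q"
        using arg_cong[OF eq, of "multiplicity q"] mult_ppow[OF assms, of q] assms(2) by simp
    qed
  qed simp
next
  fix e assume e: "e \<in> PiE P E"
  show "ppow P e \<in> {k. k > 0 \<and> prime_factors k \<subseteq> P \<and> (\<forall>p\<in>P. multiplicity p k \<in> E p)}"
    using e ppow_pos[OF assms] pf_ppow[OF assms] mult_ppow[OF assms] assms(2) by auto
next
  fix k assume k: "k \<in> {k. k > 0 \<and> prime_factors k \<subseteq> P \<and> (\<forall>p\<in>P. multiplicity p k \<in> E p)}"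
  define e where "e = restrict (\<lambda>p. multiplicity p k) P"
  have "e \<in> PiE P E" using k by (auto simp: e_def)
  moreover have "ppow P e = k"
  proof -
    have "ppow P e = (\<Prod>p\<in>P. p ^ multiplicity p k)" unfolding ppow_def e_def by simp
    also have "\<dots> = (\<Prod>p\<in>prime_factors k. p ^ multiplicity p k)"
    proof (rule prod.mono_neutral_right[OF assms(1)])
      show "prime_factors k \<subseteq> P" using k by auto
      show "\<forall>i\<in>P - prime_factors k. i ^ multiplicity i k = 1"
        using assms(2) by (auto simp: prime_factors_multiplicity)
    qed
    also have "\<dots> = k" using k by (simp add: prod_prime_factors)
    finally show ?thesis .
  qed
  ultimately show "\<exists>e\<in>PiE P E. k = ppow P e" by metis
qed

lemma mulf_ppow:
  assumes "finite P" "\<And>p. p \<in> P \<Longrightarrow> prime p" "\<And>p. \<gamma> p 0 = 1"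
  shows "mulf \<gamma> (ppow P e) = (\<Prod>p\<in>P. \<gamma> p (e p))"
proof -
  have "mulf \<gamma> (ppow P e) = (\<Prod>p\<in>prime_factors (ppow P e). \<gamma> p (e p))"
    unfolding mulf_def
  proof (intro prod.cong refl)
    fix x assume x: "x \<in> prime_factors (ppow P e)"
    then have "prime x" by (rule in_prime_factors_imp_prime)
    moreover have "x \<in> P" using x pf_ppow[OF assms(1,2)] by auto
    ultimately show "\<gamma> x (multiplicity x (ppow P e)) = \<gamma> x (e x)"
      using mult_ppow[OF assms(1,2)] by simp
  qed
  also have "\<dots> = (\<Prod>p\<in>P. \<gamma> p (e p))"
  proof (rule prod.mono_neutral_left[OF assms(1) pf_ppow[OF assms(1,2)]])
    show "\<forall>i\<in>P - prime_factors (ppow P e). \<gamma> i (e i) = 1"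
    proof
      fix i assume i: "i \<in> P - prime_factors (ppow P e)"
      then have "multiplicity i (ppow P e) = 0"
        using assms(2) by (auto simp: prime_factors_multiplicity)
      then have "e i = 0" using mult_ppow[OF assms(1,2), of i] assms(2) i by auto
      then show "\<gamma> i (e i) = 1" using assms(3) by simp
    qed
  qed
  finally show ?thesis .
qed

lemma divisors_char:
  assumes "h > (0::nat)"
  shows "{k. k dvd h} = {k. k > 0 \<and> prime_factors k \<subseteq> prime_factors h \<and>
            (\<forall>p\<in>prime_factors h. multiplicity p k \<in> {..multiplicity p h})}"
proof (intro set_eqI iffI)
  fix k assume "k \<in> {k. k dvd h}"
  then have k: "k dvd h" by simp
  then have "k > 0" using assms by (auto intro: Nat.gr0I)
  moreover have "prime_factors k \<subseteq> prime_factors h"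
    using k assms by (intro dvd_prime_factors) auto
  moreover have "\<forall>p\<in>prime_factors h. multiplicity p k \<in> {..multiplicity p h}"
    using k assms dvd_imp_multiplicity_le by auto
  ultimately show "k \<in> {k. k > 0 \<and> prime_factors k \<subseteq> prime_factors h \<and>
            (\<forall>p\<in>prime_factors h. multiplicity p k \<in> {..multiplicity p h})}" by simp
next
  fix k assume "k \<in> {k. k > 0 \<and> prime_factors k \<subseteq> prime_factors h \<and>
            (\<forall>p\<in>prime_factors h. multiplicity p k \<in> {..multiplicity p h})}"
  then have k: "k > 0" "prime_factors k \<subseteq> prime_factors h"
    "\<forall>p\<in>prime_factors h. multiplicity p k \<le> multiplicity p h" by auto
  have "k dvd h"
  proof (rule multiplicity_le_imp_dvd)
    show "k \<noteq> 0" using k by simp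
    fix p :: nat assume p: "prime p"
    show "multiplicity p k \<le> multiplicity p h"
    proof (cases "p \<in> prime_factors h")
      case True then show ?thesis using k by auto
    next
      case False
      then have "p \<notin> prime_factors k" using k by auto
      then have "multiplicity p k = 0" using p by (auto simp: prime_factors_multiplicity)
      then show ?thesis by simp
    qed
  qed
  then show "k \<in> {k. k dvd h}" by simp
qed

lemma divisor_sum_mulf:
  assumes "h > (0::nat)" "\<And>p. \<gamma> p 0 = 1"
  shows "(\<Sum>k | k dvd h. mulf \<gamma> k) = (\<Prod>p\<in>prime_factors h. \<Sum>j\<le>multiplicity p h. \<gamma> p j)"
proof -
  let ?P = "prime_factors h" and ?E = "\<lambda>p. {..multiplicity p h}"
  have fP: "finite ?P" and pP: "\<And>p. p \<in> ?P \<Longrightarrow> prime p" by auto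
  have "(\<Prod>p\<in>?P. \<Sum>j\<le>multiplicity p h. \<gamma> p j) = (\<Sum>e\<in>PiE ?P ?E. \<Prod>p\<in>?P. \<gamma> p (e p))"
    by (rule prod_sum_PiE) auto
  also have "\<dots> = (\<Sum>e\<in>PiE ?P ?E. mulf \<gamma> (ppow ?P e))"
  proof (intro sum.cong refl)
    fix e show "(\<Prod>p\<in>?P. \<gamma> p (e p)) = mulf \<gamma> (ppow ?P e)"
      by (rule mulf_ppow[symmetric]) (use assms in auto)
  qed
  also have "\<dots> = (\<Sum>k\<in>{k. k > 0 \<and> prime_factors k \<subseteq> ?P \<and> (\<forall>p\<in>?P. multiplicity p k \<in> ?E p)}. mulf \<gamma> k)"
    by (rule sum.reindex_bij_betw[OF ppow_bij[OF fP pP]])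
  also have "{k. k > 0 \<and> prime_factors k \<subseteq> ?P \<and> (\<forall>p\<in>?P. multiplicity p k \<in> ?E p)} = {k. k dvd h}"
    using divisors_char[OF assms(1)] by simp
  finally show ?thesis by simp
qed


lemma summable_inv_sq: "summable (\<lambda>k::nat. 1 / real k ^ 2)"
  using inverse_power_summable[of 2, where 'a=real] by (simp add: inverse_eq_divide)

lemma tail_inv_sq:
  assumes "N \<ge> (1::nat)"
  shows "(\<Sum>i. 1 / real (i + Suc N) ^ 2) \<le> 1 / real N"
proof -
  have t: "(\<lambda>i. 1 / real (i + N) - 1 / real (Suc i + N)) sums (1 / real (0 + N) - 0)"
    by (rule telescope_sums'[of "\<lambda>i. 1 / real (i + N)"]) real_asymp
  have le: "1 / real (i + Suc N) ^ 2 \<le> 1 / real (i + N) - 1 / real (Suc i + N)" for i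
  proof -
    have pos: "real (i + N) > 0" using assms by simp
    have "1 / real (i + N) - 1 / real (Suc i + N) = 1 / (real (i+N) * real (i + Suc N))"
      using pos by (simp add: field_simps)
    also have "\<dots> \<ge> 1 / real (i + Suc N) ^ 2"
      using pos by (intro divide_left_mono) (auto simp: power2_eq_square intro!: mult_right_mono)
    finally show ?thesis .
  qed
  have "(\<Sum>i. 1 / real (i + Suc N) ^ 2) \<le> (\<Sum>i. 1 / real (i + N) - 1 / real (Suc i + N))"
    using le t summable_ignore_initial_segment[OF summable_inv_sq, of "Suc N"]
    by (intro suminf_le) (auto simp: sums_iff)
  also have "\<dots> = 1 / real N" using t by (simp add: sums_iff)
  finally show ?thesis .
qed

lemma harm_bound:
  "(\<Sum>k=1..N. 1 / real k) \<le> 1 + ln (real N)" if "N \<ge> 1"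
  using that
proof (induction N rule: dec_induct)
  case base then show ?case by simp
next
  case (step n)
  have n: "real n \<ge> 1" using step by simp
  have "ln (real n / real (Suc n)) \<le> real n / real (Suc n) - 1"
    by (rule ln_le_minus_one) (use n in simp)
  also have "\<dots> = - (1 / real (Suc n))" by (simp add: field_simps)
  finally have "1 / real (Suc n) \<le> ln (real (Suc n)) - ln (real n)"
    using n by (simp add: ln_div)
  then show ?case using step by simp
qed

lemma card_multiples:
  assumes "k > (0::nat)"
  shows "card {h \<in> {1..N}. k dvd h} = N div k"
proof -
  have "{h \<in> {1..N}. k dvd h} = (\<lambda>i. k * i) ` {1..N div k}"
  proof (intro set_eqI iffI)
    fix h assume "h \<in> {h \<in> {1..N}. k dvd h}"
    then obtain i where "h = k * i" "1 \<le> h" "h \<le> N" by auto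
    then have "i \<ge> 1" "i \<le> N div k" using assms
      by (auto simp: less_eq_div_iff_mult_less_eq mult.commute intro: Nat.gr0I)
    then show "h \<in> (\<lambda>i. k * i) ` {1..N div k}" using \<open>h = k * i\<close> by auto
  next
    fix h assume "h \<in> (\<lambda>i. k * i) ` {1..N div k}"
    then obtain i where "h = k * i" "i \<in> {1..N div k}" by blast
    then have "h = k * i" "1 \<le> i" "i \<le> N div k" by auto
    then show "h \<in> {h \<in> {1..N}. k dvd h}" using assms
      by (auto simp: less_eq_div_iff_mult_less_eq mult.commute)
  qed
  moreover have "inj_on (\<lambda>i. k * i) {1..N div k}" using assms by (auto simp: inj_on_def)
  ultimately show ?thesis by (simp add: card_image)
qed

lemma divsum_swap:
  fixes g :: "nat \<Rightarrow> real"
  shows "(\<Sum>h=1..N. \<Sum>k | k dvd h. g k) = (\<Sum>k=1..N. g k * real (N div k))"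
proof -
  have "(\<Sum>h=1..N. \<Sum>k | k dvd h. g k) = (\<Sum>h=1..N. \<Sum>k=1..N. if k dvd h then g k else 0)"
  proof (rule sum.cong[OF refl])
    fix h assume h: "h \<in> {1..N}"
    have "{k. k dvd h} = {k \<in> {1..N}. k dvd h}"
      using h by (auto intro: Nat.gr0I dest: dvd_imp_le)
    moreover have "(\<Sum>k=1..N. if k dvd h then g k else 0) = (\<Sum>k\<in>{k \<in> {1..N}. k dvd h}. g k)"
      by (rule sum.inter_filter[symmetric]) simp
    ultimately show "(\<Sum>k | k dvd h. g k) = (\<Sum>k=1..N. if k dvd h then g k else 0)"
      by simp
  qed
  also have "\<dots> = (\<Sum>k=1..N. \<Sum>h=1..N. if k dvd h then g k else 0)"
    by (rule sum.swap)
  also have "\<dots> = (\<Sum>k=1..N. g k * real (N div k))"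
  proof (intro sum.cong refl)
    fix k assume k: "k \<in> {1..N}"
    have "(\<Sum>h=1..N. if k dvd h then g k else 0) = (\<Sum>h\<in>{h \<in> {1..N}. k dvd h}. g k)"
      by (rule sum.inter_filter[symmetric]) simp
    also have "\<dots> = g k * real (N div k)" using card_multiples[of k N] k by simp
    finally show "(\<Sum>h=1..N. if k dvd h then g k else 0) = g k * real (N div k)" .
  qed
  finally show ?thesis .
qed

lemma coef_summable:
  fixes g :: "nat \<Rightarrow> real"
  assumes gb: "\<And>k. k \<ge> 1 \<Longrightarrow> \<bar>g k\<bar> \<le> B / real k"
  shows "summable (\<lambda>k. \<bar>g k / real k\<bar>)" "summable (\<lambda>k. g k / real k)"
        "\<And>k. \<bar>g k / real k\<bar> \<le> B * (1 / real k ^ 2)"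
proof -
  show b: "\<bar>g k / real k\<bar> \<le> B * (1 / real k ^ 2)" for k
  proof (cases "k = 0")
    case False
    then have "\<bar>g k / real k\<bar> = \<bar>g k\<bar> / real k" by (simp add: abs_divide)
    also have "\<dots> \<le> (B / real k) / real k" using gb[of k] False by (intro divide_right_mono) auto
    finally show ?thesis by (simp add: power2_eq_square)
  next
    case True
    have "B \<ge> 0" using gb[of 1] by linarith
    then show ?thesis using True by simp
  qed
  show "summable (\<lambda>k. \<bar>g k / real k\<bar>)"
    by (rule summable_comparison_test'[OF summable_mult[OF summable_inv_sq, of B]]) (use b in auto)
  then show "summable (\<lambda>k. g k / real k)" by (rule summable_rabs_cancel)
qed

lemma main_asymp:
  fixes g :: "nat \<Rightarrow> real"
  assumes gb: "\<And>k. k \<ge> 1 \<Longrightarrow> \<bar>g k\<bar> \<le> B / real k" and N: "N \<ge> 1"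
  shows "\<bar>(\<Sum>h=1..N. \<Sum>k | k dvd h. g k) - (\<Sum>k. g k / real k) * real N\<bar> \<le> B * (2 + ln (real N))"
proof -
  note cs = coef_summable[OF gb]
  have B0: "B \<ge> 0" using gb[of 1] by linarith
  let ?a = "\<lambda>k. g k / real k"
  define A where "A = (\<Sum>k. ?a k)"
  have split: "A = (\<Sum>i. ?a (i + Suc N)) + (\<Sum>i<Suc N. ?a i)"
    unfolding A_def by (rule suminf_split_initial_segment[OF cs(2)])
  have fin: "(\<Sum>i<Suc N. ?a i) = (\<Sum>k=1..N. ?a k)"
    by (simp add: atLeast1_atMost_eq_remove0 lessThan_Suc_atMost sum.remove[of "{..N}" 0])
  have tail: "\<bar>\<Sum>i. ?a (i + Suc N)\<bar> \<le> B / real N"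
  proof -
    have s1: "summable (\<lambda>i. \<bar>?a (i + Suc N)\<bar>)"
      using summable_ignore_initial_segment[OF cs(1)] .
    have s2: "summable (\<lambda>i. B * (1 / real (i + Suc N) ^ 2))"
      using summable_mult[OF summable_ignore_initial_segment[OF summable_inv_sq, of "Suc N"]] by simp
    have "\<bar>\<Sum>i. ?a (i + Suc N)\<bar> \<le> (\<Sum>i. \<bar>?a (i + Suc N)\<bar>)" by (rule summable_rabs[OF s1])
    also have "\<dots> \<le> (\<Sum>i. B * (1 / real (i + Suc N) ^ 2))"
      by (rule suminf_le[OF _ s1 s2]) (rule cs(3))
    also have "\<dots> = B * (\<Sum>i. 1 / real (i + Suc N) ^ 2)"
      by (rule suminf_mult[OF summable_ignore_initial_segment[OF summable_inv_sq]])
    also have "\<dots> \<le> B * (1 / real N)" using tail_inv_sq[OF N] B0 by (intro mult_left_mono) auto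
    finally show ?thesis by simp
  qed
  have eq: "(\<Sum>h=1..N. \<Sum>k | k dvd h. g k) - A * real N
      = (\<Sum>k=1..N. g k * (real (N div k) - real N / real k)) - (\<Sum>i. ?a (i + Suc N)) * real N"
    unfolding divsum_swap split fin
    by (simp add: algebra_simps sum_subtractf sum_distrib_left sum_distrib_right)
  have p1: "\<bar>\<Sum>k=1..N. g k * (real (N div k) - real N / real k)\<bar> \<le> B * (1 + ln (real N))"
  proof -
    have "\<bar>\<Sum>k=1..N. g k * (real (N div k) - real N / real k)\<bar>
        \<le> (\<Sum>k=1..N. \<bar>g k * (real (N div k) - real N / real k)\<bar>)" by (rule sum_abs)
    also have "\<dots> \<le> (\<Sum>k=1..N. B * (1 / real k))"
    proof (intro sum_mono)
      fix k assume k: "k \<in> {1..N}"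
      have fl: "real (N div k) = of_int \<lfloor>real N / real k\<rfloor>"
        by (metis floor_divide_of_nat_eq of_int_of_nat_eq)
      have "\<bar>real (N div k) - real N / real k\<bar> \<le> 1"
        unfolding fl by linarith
      then have "\<bar>g k * (real (N div k) - real N / real k)\<bar> \<le> \<bar>g k\<bar> * 1"
        unfolding abs_mult by (intro mult_left_mono) auto
      also have "\<dots> \<le> B * (1 / real k)" using gb[of k] k by simp
      finally show "\<bar>g k * (real (N div k) - real N / real k)\<bar> \<le> B * (1 / real k)" .
    qed
    also have "\<dots> = B * (\<Sum>k=1..N. 1 / real k)" by (simp add: sum_distrib_left)
    also have "\<dots> \<le> B * (1 + ln (real N))" using harm_bound[OF N] B0 by (intro mult_left_mono)
    finally show ?thesis .
  qed
  have p2: "\<bar>(\<Sum>i. ?a (i + Suc N)) * real N\<bar> \<le> B"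
  proof -
    have "\<bar>(\<Sum>i. ?a (i + Suc N)) * real N\<bar> = \<bar>\<Sum>i. ?a (i + Suc N)\<bar> * real N" by (simp add: abs_mult)
    also have "\<dots> \<le> B / real N * real N" using tail by (intro mult_right_mono) auto
    also have "\<dots> = B" using N by simp
    finally show ?thesis .
  qed
  have tri: "\<bar>(\<Sum>k=1..N. g k * (real (N div k) - real N / real k)) - (\<Sum>i. ?a (i + Suc N)) * real N\<bar>
     \<le> \<bar>\<Sum>k=1..N. g k * (real (N div k) - real N / real k)\<bar> + \<bar>(\<Sum>i. ?a (i + Suc N)) * real N\<bar>"
    by (rule abs_triangle_ineq4)
  have "B * (2 + ln (real N)) = B * (1 + ln (real N)) + B" by algebra
  then show ?thesis unfolding A_def[symmetric] eq using p1 p2 tri by linarith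
qed


lemma H_sum_identity:
  fixes f :: "nat \<Rightarrow> real"
  shows "(\<Sum>h=1..H-1. real (H-h) * f h) = (\<Sum>N=1..H-1. \<Sum>h=1..N. f h)"
proof (induction H)
  case 0 then show ?case by simp
next
  case (Suc H)
  have a: "(\<Sum>h = 1..H - 1. real (H - h) * f h) = (\<Sum>h = 1..H. real (H - h) * f h)"
  proof (cases H)
    case (Suc k) then show ?thesis by (simp add: sum.cl_ivl_Suc)
  qed simp
  have b: "(\<Sum>h = 1..H. real (H - h) * f h) + (\<Sum>h=1..H. f h) = (\<Sum>h = 1..H. real (Suc H - h) * f h)"
    by (subst sum.distrib[symmetric], rule sum.cong) (auto simp: of_nat_diff algebra_simps)
  have c: "(\<Sum>N=1..H. \<Sum>h=1..N. f h) = (\<Sum>N=1..H-1. \<Sum>h=1..N. f h) + (\<Sum>h=1..H. f h)"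
  proof (cases H)
    case (Suc k) then show ?thesis by (simp add: sum.cl_ivl_Suc)
  qed simp
  show ?case using Suc.IH a b c by simp
qed

lemma gauss_real0: "(\<Sum>N=1..k. real N) = real k * (real k + 1) / 2"
  by (induction k) (auto simp: field_simps)

lemma gauss_real: "(\<Sum>N=1..H-1. real N) = real H * (real H - 1) / 2"
proof (cases H)
  case (Suc k)
  then show ?thesis using gauss_real0[of k] by (simp add: algebra_simps)
qed simp

lemma final_bound:
  fixes g :: "nat \<Rightarrow> real"
  assumes gb: "\<And>k. k \<ge> 1 \<Longrightarrow> \<bar>g k\<bar> \<le> B / real k" and H: "H \<ge> 1"
  shows "\<bar>2 * (\<Sum>h=1..H-1. real (H-h) * (\<Sum>k | k dvd h. g k)) - (\<Sum>k. g k / real k) * real H ^ 2\<bar>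
     \<le> \<bar>\<Sum>k. g k / real k\<bar> * real H + 2 * B * real H * (2 + ln (real H))"
proof -
  define A where "A = (\<Sum>k. g k / real k)"
  define F where "F N = (\<Sum>h=1..N. \<Sum>k | k dvd h. g k)" for N
  define E where "E N = F N - A * real N" for N
  have B0: "B \<ge> 0" using gb[of 1] by linarith
  have Eb: "\<bar>E N\<bar> \<le> B * (2 + ln (real H))" if "N \<in> {1..H-1}" for N
  proof -
    have "\<bar>E N\<bar> \<le> B * (2 + ln (real N))"
      unfolding E_def F_def A_def using main_asymp[OF gb, of N] that by simp
    also have "\<dots> \<le> B * (2 + ln (real H))"
      using that B0 by (intro mult_left_mono) auto
    finally show ?thesis .
  qed
  have "2 * (\<Sum>h=1..H-1. real (H-h) * (\<Sum>k | k dvd h. g k)) = 2 * (\<Sum>N=1..H-1. F N)"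
    unfolding F_def by (rule arg_cong[OF H_sum_identity])
  also have "(\<Sum>N=1..H-1. F N) = A * (\<Sum>N=1..H-1. real N) + (\<Sum>N=1..H-1. E N)"
    unfolding E_def by (simp add: sum_distrib_left sum.distrib[symmetric])
  also have "(\<Sum>N=1..H-1. real N) = real H * (real H - 1) / 2" by (rule gauss_real)
  finally have eq0: "2 * (\<Sum>h=1..H-1. real (H-h) * (\<Sum>k | k dvd h. g k))
     = 2 * (A * (real H * (real H - 1) / 2)) + 2 * (\<Sum>N=1..H-1. E N)" by simp
  have "2 * (A * (real H * (real H - 1) / 2)) = A * real H ^ 2 - A * real H"
    by (simp add: field_simps power2_eq_square)
  with eq0 have eq: "2 * (\<Sum>h=1..H-1. real (H-h) * (\<Sum>k | k dvd h. g k)) - A * real H ^ 2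
      = - (A * real H) + 2 * (\<Sum>N=1..H-1. E N)"
    by linarith
  have sE: "\<bar>\<Sum>N=1..H-1. E N\<bar> \<le> real H * (B * (2 + ln (real H)))"
  proof -
    have "\<bar>\<Sum>N=1..H-1. E N\<bar> \<le> (\<Sum>N=1..H-1. \<bar>E N\<bar>)" by (rule sum_abs)
    also have "\<dots> \<le> (\<Sum>N=1..H-1. B * (2 + ln (real H)))" by (rule sum_mono) (rule Eb)
    also have "\<dots> = real (H-1) * (B * (2 + ln (real H)))" by simp
    also have "\<dots> \<le> real H * (B * (2 + ln (real H)))"
      using B0 H by (intro mult_right_mono) auto
    finally show ?thesis .
  qed
  have "\<bar>- (A * real H) + 2 * (\<Sum>N=1..H-1. E N)\<bar> \<le> \<bar>A\<bar> * real H + 2 * \<bar>\<Sum>N=1..H-1. E N\<bar>"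
  proof -
    have "\<bar>- (A * real H) + 2 * (\<Sum>N=1..H-1. E N)\<bar> \<le> \<bar>- (A * real H)\<bar> + \<bar>2 * (\<Sum>N=1..H-1. E N)\<bar>"
      by (rule abs_triangle_ineq)
    then show ?thesis by (simp add: abs_mult)
  qed
  then show ?thesis unfolding A_def[symmetric] eq using sE by (simp add: algebra_simps)
qed


definition Wm :: "nat \<Rightarrow> nat \<Rightarrow> nat \<Rightarrow> real" where
  "Wm d p m = (
     if d = 1 \<and> p = 2 then
       (if m = 0 then 1/4 else (2^(m+1) - 3) / 2^(m+2))
     else if d = 2 \<and> p = 2 then
       (if m \<le> 1 then 1/4 else (2^m - 3) / 2^(m+1))
     else if d = 3 \<and> p = 3 then
       1/2 * ((3^(m+1) - 2) / 3^(m+1))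
     else if d = 4 \<and> p = 2 then
       (if m = 0 then 1/8 else if m = 1 then 0 else if m = 2 then 5/16
        else (3 * 2^(m-1) - 3) / 2^(m+2))
     else if d = 7 \<and> p = 2 then
       (if m \<le> 1 then 1/2 else 3/4)
     else if d = 7 \<and> p = 7 then
       1/2 * ((7^(m+1) - 4) / 7^(m+1))
     else 0)"

lemma W_Wm: "W d p h = Wm d p (m_exp p h)"
  unfolding W_def Wm_def Let_def by simp

definition gR :: "nat \<Rightarrow> nat \<Rightarrow> nat \<Rightarrow> real" where
  "gR d p j = (if j = 0 then 1 else (Wm d p j - Wm d p (j - 1)) / Wm d p 0)"

definition gg :: "nat \<Rightarrow> nat \<Rightarrow> nat \<Rightarrow> real" where
  "gg d p j = (if p \<in> R_set d then gR d p j else if p \<in> Q_set d then (1 / real p) ^ j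
               else if j = 0 then 1 else 0)"

definition Cd :: "nat \<Rightarrow> real" where
  "Cd d = c_const d * (\<Prod>p\<in>R_set d. Wm d p 0)"

lemma gg0: "gg d p 0 = 1" by (simp add: gg_def gR_def)

lemma R_facts:
  assumes "d \<in> {1,2,3,4,7}"
  shows "finite (R_set d)" "\<And>p. p \<in> R_set d \<Longrightarrow> prime p"
    "\<And>p. p \<in> R_set d \<Longrightarrow> p \<notin> Q_set d" "\<And>p. p \<in> R_set d \<Longrightarrow> Wm d p 0 \<noteq> 0"
  using assms by (auto simp: R_set_def Q_set_def Wm_def)

lemma Q_prime: "p \<in> Q_set d \<Longrightarrow> prime p" by (simp add: Q_set_def)

lemma sum_gR:
  assumes "Wm d p 0 \<noteq> 0"
  shows "(\<Sum>j\<le>m. gR d p j) = Wm d p m / Wm d p 0"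
proof (induction m)
  case 0 then show ?case using assms by (simp add: gR_def)
next
  case (Suc m) then show ?case using assms by (simp add: gR_def diff_divide_distrib)
qed

lemma sum_geom_Q:
  assumes "p \<ge> (2::nat)"
  shows "(\<Sum>j\<le>m. (1 / real p) ^ j) = (1 - real p powi (- (int m + 1))) / (1 - 1 / real p)"
proof -
  have "real p powi (- (int m + 1)) = (1 / real p) ^ Suc m"
  proof -
    have "real p powi (- (int m + 1)) = real p powi (- int (Suc m))"
      by (rule arg_cong[where f="\<lambda>e. real p powi e"]) simp
    also have "\<dots> = inverse (real p powi (int (Suc m)))" by (rule power_int_minus)
    also have "\<dots> = inverse (real p ^ Suc m)" by (simp only: power_int_of_nat)
    also have "\<dots> = (1 / real p) ^ Suc m" by (simp add: power_one_over inverse_eq_divide)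
    finally show ?thesis .
  qed
  moreover have "1 - 1 / real p \<noteq> 0" using assms by simp
  moreover have "(1 - 1 / real p) * (\<Sum>j\<le>m. (1 / real p) ^ j) = 1 - (1 / real p) ^ Suc m"
    by (rule sum_gp_basic)
  ultimately show ?thesis by (simp add: field_simps)
qed

lemma T_eq:
  assumes d: "d \<in> {1,2,3,4,7}" and h: "h > 0"
  shows "T_series d h = Cd d * (\<Sum>k | k dvd h. mulf (gg d) k)"
proof -
  define GG where "GG p = (\<Sum>j\<le>multiplicity p h. gg d p j)" for p
  note RF = R_facts[OF d]
  have ds: "(\<Sum>k | k dvd h. mulf (gg d) k) = (\<Prod>p\<in>prime_factors h. GG p)"
    unfolding GG_def by (rule divisor_sum_mulf[OF h]) (rule gg0)
  have GR: "GG p = Wm d p (multiplicity p h) / Wm d p 0" if "p \<in> R_set d" for p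
    unfolding GG_def gg_def using that sum_gR[OF RF(4)[OF that]] by simp
  have GQ: "GG p = (1 - real p powi (- (int (multiplicity p h) + 1))) / (1 - 1 / real p)"
    if "p \<in> Q_set d" for p
  proof -
    have "p \<notin> R_set d" using that RF(3) by auto
    moreover have "p \<ge> 2" using Q_prime[OF that] prime_ge_2_nat by blast
    ultimately show ?thesis unfolding GG_def gg_def using that sum_geom_Q by simp
  qed
  have G1: "GG p = 1" if "p \<notin> R_set d" "p \<notin> Q_set d" for p
  proof -
    have "GG p = (\<Sum>j\<le>multiplicity p h. if j = 0 then 1 else 0)"
      unfolding GG_def gg_def using that by simp
    also have "\<dots> = 1" by (simp add: sum.delta)
    finally show ?thesis .
  qed
  have G0: "GG p = 1" if "p \<notin> prime_factors h" "prime p" for p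
  proof -
    have "multiplicity p h = 0" using that by (auto simp: prime_factors_multiplicity)
    then show ?thesis unfolding GG_def by (simp add: gg0)
  qed
  have WR: "(\<Prod>p\<in>R_set d. W d p h) = (\<Prod>p\<in>R_set d. Wm d p 0) * (\<Prod>p\<in>R_set d. GG p)"
  proof -
    have "(\<Prod>p\<in>R_set d. W d p h) = (\<Prod>p\<in>R_set d. Wm d p 0 * GG p)"
      using GR RF(4) by (intro prod.cong) (auto simp: W_Wm m_exp_def)
    then show ?thesis by (simp add: prod.distrib)
  qed
  have R2: "(\<Prod>p\<in>R_set d. GG p) = (\<Prod>p\<in>prime_factors h \<inter> R_set d. GG p)"
    by (rule prod.mono_neutral_right[OF RF(1)]) (use G0 RF(2) in auto)
  have Qs: "{p \<in> Q_set d. p dvd h} = prime_factors h \<inter> Q_set d"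
    using h Q_prime by (auto simp: in_prime_factors_iff)
  have QP: "(\<Prod>p\<in>{p \<in> Q_set d. p dvd h}.
        (1 - (real p) powi (- (int (m_exp p h) + 1))) / (1 - 1 / real p))
      = (\<Prod>p\<in>prime_factors h \<inter> Q_set d. GG p)"
    unfolding Qs m_exp_def using GQ by (intro prod.cong) auto
  have split: "(\<Prod>p\<in>prime_factors h. GG p)
     = (\<Prod>p\<in>prime_factors h \<inter> R_set d. GG p) * (\<Prod>p\<in>prime_factors h - R_set d. GG p)"
    by (metis Int_Diff_Un Int_Diff_disjoint finite_set_mset finite_Int finite_Diff prod.union_disjoint)
  have rest: "(\<Prod>p\<in>prime_factors h - R_set d. GG p) = (\<Prod>p\<in>prime_factors h \<inter> Q_set d. GG p)"
    by (rule prod.mono_neutral_right) (use G1 RF(3) in auto)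
  show ?thesis
    unfolding T_series_def Cd_def ds WR R2 QP split rest by (simp add: mult_ac)
qed


definition cR :: "nat \<Rightarrow> nat \<Rightarrow> nat \<Rightarrow> real" where
  "cR d p j = (if j = 0 then 1 else
     if d = 1 \<and> p = 2 then (if j = 1 then -1 else 3)
     else if d = 2 \<and> p = 2 then (if j = 1 then 0 else if j = 2 then -2 else 6)
     else if d = 3 \<and> p = 3 then 4
     else if d = 4 \<and> p = 2 then (if j = 1 then -2 else if j = 2 then 10 else if j = 3 then -2 else 6)
     else if d = 7 \<and> p = 2 then (if j = 2 then 2 else 0)
     else if d = 7 \<and> p = 7 then 8 else 0)"

lemma j_cases:
  fixes j :: nat
  obtains "j = 0" | "j = 1" | "j = 2" | "j = 3" | k where "j = k + 4"
proof -
  have "j = 0 \<or> j = 1 \<or> j = 2 \<or> j = 3 \<or> (\<exists>k. j = k + 4)" by presburger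
  then show ?thesis using that by blast
qed

lemma gR_1: "gR 1 2 j = cR 1 2 j / 2 ^ j"
  by (cases j rule: j_cases) (simp_all add: gR_def Wm_def cR_def field_simps power_add)

lemma gR_2: "gR 2 2 j = cR 2 2 j / 2 ^ j"
  by (cases j rule: j_cases) (simp_all add: gR_def Wm_def cR_def field_simps power_add)

lemma gR_3: "gR 3 3 j = cR 3 3 j / 3 ^ j"
  by (cases j rule: j_cases) (simp_all add: gR_def Wm_def cR_def field_simps power_add)

lemma gR_4: "gR 4 2 j = cR 4 2 j / 2 ^ j"
  by (cases j rule: j_cases) (simp_all add: gR_def Wm_def cR_def field_simps power_add)

lemma gR_72: "gR 7 2 j = cR 7 2 j / 2 ^ j"
  by (cases j rule: j_cases) (simp_all add: gR_def Wm_def cR_def field_simps power_add)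

lemma gR_77: "gR 7 7 j = cR 7 7 j / 7 ^ j"
  by (cases j rule: j_cases) (simp_all add: gR_def Wm_def cR_def field_simps power_add)


lemma dcases:
  assumes "d \<in> {1,2,3,4,7::nat}"
  obtains "d = 1" | "d = 2" | "d = 3" | "d = 4" | "d = 7"
  using assms by auto

lemma gR_closed:
  assumes "d \<in> {1,2,3,4,7}" "p \<in> R_set d"
  shows "gR d p j = cR d p j / real p ^ j"
  using assms gR_1 gR_2 gR_3 gR_4 gR_72 gR_77 by (auto simp: R_set_def)

lemma cR_bound: "\<bar>cR d p j\<bar> \<le> 10"
  by (simp add: cR_def)

lemma gg_bound:
  assumes d: "d \<in> {1,2,3,4,7}" and p: "prime p"
  shows "\<bar>gg d p j\<bar> \<le> (if p \<in> R_set d then 10 else 1) / real p ^ j"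
proof (cases "p \<in> R_set d")
  case True
  then have "\<bar>gg d p j\<bar> = \<bar>cR d p j\<bar> / real p ^ j"
    using gR_closed[OF d True] by (simp add: gg_def abs_divide)
  also have "\<dots> \<le> 10 / real p ^ j" using cR_bound by (intro divide_right_mono) auto
  finally show ?thesis using True by simp
next
  case False
  then show ?thesis by (auto simp: gg_def power_one_over)
qed

lemma prod_b_bound:
  assumes d: "d \<in> {1,2,3,4,7}" and fin: "finite S"
  shows "(\<Prod>p\<in>S. (if p \<in> R_set d then 10 else 1 :: real)) \<le> 100"
proof -
  have "(\<Prod>p\<in>S. (if p \<in> R_set d then 10 else 1 :: real)) = (\<Prod>p\<in>{p \<in> S. p \<in> R_set d}. 10)"
    by (rule prod.inter_filter[symmetric, OF fin])
  also have "\<dots> = 10 ^ card {p \<in> S. p \<in> R_set d}" by simp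
  also have "\<dots> \<le> 10 ^ card (R_set d)"
    using R_facts(1)[OF d] by (intro power_increasing card_mono) auto
  also have "card (R_set d) \<le> 2" using d by (auto simp: R_set_def)
  then have "(10::real) ^ card (R_set d) \<le> 10 ^ 2" by (intro power_increasing) auto
  finally show ?thesis by simp
qed

lemma gk_bound:
  assumes d: "d \<in> {1,2,3,4,7}" and k: "k \<ge> 1"
  shows "\<bar>mulf (gg d) k\<bar> \<le> 100 / real k"
proof -
  let ?b = "\<lambda>p. (if p \<in> R_set d then 10 else 1 :: real)"
  have "\<bar>mulf (gg d) k\<bar> = (\<Prod>p\<in>prime_factors k. \<bar>gg d p (multiplicity p k)\<bar>)"
    unfolding mulf_def by (rule abs_prod)
  also have "\<dots> \<le> (\<Prod>p\<in>prime_factors k. ?b p / real p ^ multiplicity p k)"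
    by (intro prod_mono conjI gg_bound[OF d]) auto
  also have "\<dots> = (\<Prod>p\<in>prime_factors k. ?b p) / (\<Prod>p\<in>prime_factors k. real p ^ multiplicity p k)"
    by (rule prod_dividef)
  also have "(\<Prod>p\<in>prime_factors k. real p ^ multiplicity p k) = real k"
  proof -
    have "(\<Prod>p\<in>prime_factors k. real p ^ multiplicity p k) = real (\<Prod>p\<in>prime_factors k. p ^ multiplicity p k)"
      by simp
    also have "\<dots> = real k" using k by (subst prod_prime_factors) auto
    finally show ?thesis .
  qed
  also have "(\<Prod>p\<in>prime_factors k. ?b p) / real k \<le> 100 / real k"
    using prod_b_bound[OF d] k by (intro divide_right_mono) auto
  finally show ?thesis .
qed

definition eRv :: "nat \<Rightarrow> nat \<Rightarrow> real" where
  "eRv d p = (if d = 3 then 3/2 else if d = 4 then 9/8 else if d = 7 \<and> p = 2 then 9/8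
              else if d = 7 then 7/6 else 1)"

definition Ev :: "nat \<Rightarrow> nat \<Rightarrow> real" where
  "Ev d p = (if p \<in> R_set d then eRv d p else if p \<in> Q_set d then 1 / (1 - 1 / real p ^ 2) else 1)"

lemma R_factor_sums:
  assumes d: "d \<in> {1,2,3,4,7}" and pR: "p \<in> R_set d"
  shows "(\<lambda>j. gg d p j / real p ^ j) sums eRv d p"
proof -
  have p2: "p \<ge> 2" using R_facts(2)[OF d pR] prime_ge_2_nat by blast
  define x where "x = 1 / real p ^ 2"
  have x: "norm x < 1" unfolding x_def using p2 by (simp add: power_le_one_iff)
  define ci where "ci = cR d p 4"
  have xj: "x ^ j = 1 / (real p ^ j * real p ^ j)" for j
  proof -
    have "x ^ j = 1 / (real p ^ 2) ^ j" unfolding x_def by (simp add: power_one_over)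
    also have "(real p ^ 2) ^ j = real p ^ j * real p ^ j"
      by (simp add: power_mult[symmetric] power2_eq_square[symmetric] mult.commute)
    finally show ?thesis .
  qed
  have eq: "gg d p j / real p ^ j = cR d p j * x ^ j" for j
    using gR_closed[OF d pR] pR unfolding gg_def xj by simp
  have geo: "(\<lambda>j. ci * x ^ j) sums (ci * (1 / (1 - x)))"
    by (rule sums_mult[OF geometric_sums[OF x]])
  have s: "(\<lambda>j. if j \<in> {0,1,2,3} then cR d p j * x ^ j else ci * x ^ j) sums
     (ci * (1 / (1 - x)) + (\<Sum>j\<in>{0,1,2,3}. cR d p j * x ^ j - ci * x ^ j))"
    by (rule sums_If_finite_set'[OF geo]) auto
  have same: "(if j \<in> {0,1,2,3} then cR d p j * x ^ j else ci * x ^ j) = gg d p j / real p ^ j" for j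
    unfolding eq ci_def by (auto simp: cR_def)
  have val: "ci * (1 / (1 - x)) + (\<Sum>j\<in>{0,1,2,3}. cR d p j * x ^ j - ci * x ^ j) = eRv d p"
    using d pR unfolding ci_def x_def
    by (elim dcases) (auto simp: R_set_def cR_def eRv_def field_simps)
  show ?thesis using s unfolding same val .
qed


lemma E_sums:
  assumes d: "d \<in> {1,2,3,4,7}" and p: "prime p"
  shows "(\<lambda>j. gg d p j / real p ^ j) sums Ev d p"
proof (cases "p \<in> R_set d")
  case True
  then show ?thesis using R_factor_sums[OF d True] by (simp add: Ev_def)
next
  case nR: False
  have p2: "p \<ge> 2" using p prime_ge_2_nat by blast
  show ?thesis
  proof (cases "p \<in> Q_set d")
    case True
    have x: "norm (1 / real p ^ 2) < 1" using p2 by (simp add: power_le_one_iff)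
    have eq: "gg d p j / real p ^ j = (1 / real p ^ 2) ^ j" for j
      using nR True by (simp add: gg_def power_one_over power_mult[symmetric] mult.commute power2_eq_square[symmetric])
    show ?thesis using geometric_sums[OF x] nR True unfolding eq by (simp add: Ev_def)
  next
    case False
    have "(\<lambda>j. gg d p j / real p ^ j) sums (\<Sum>j\<in>{0}. gg d p j / real p ^ j)"
      by (rule sums_finite) (use nR False in \<open>auto simp: gg_def\<close>)
    then show ?thesis using nR False by (simp add: Ev_def gg_def)
  qed
qed

lemma E_abs_summable:
  assumes d: "d \<in> {1,2,3,4,7}" and p: "prime p"
  shows "summable (\<lambda>j. norm (gg d p j / real p ^ j))"
proof (rule summable_comparison_test'[OF summable_mult[OF summable_geometric[of "1/2::real"]]])
  have p2: "real p \<ge> 2" using p prime_ge_2_nat by (simp add: of_nat_le_iff[symmetric]) 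
  fix j :: nat
  have "norm (norm (gg d p j / real p ^ j)) = \<bar>gg d p j\<bar> / real p ^ j" by (simp add: abs_divide)
  also have "\<dots> \<le> (10 / real p ^ j) / real p ^ j"
    using gg_bound[OF d p, of j] by (intro divide_right_mono) (auto split: if_splits simp: divide_right_mono)
  also have "\<dots> \<le> 10 / real p ^ j / 1" using p2 by (intro divide_left_mono) auto
  also have "\<dots> \<le> 10 / 2 ^ j" using p2 by (simp, intro divide_left_mono power_mono) auto
  also have "\<dots> = 10 * (1/2) ^ j" by (simp add: power_one_over)
  finally show "norm (norm (gg d p j / real p ^ j)) \<le> 10 * (1/2) ^ j" .
qed auto

lemma E_has_sum:
  assumes d: "d \<in> {1,2,3,4,7}" and p: "prime p"
  shows "((\<lambda>j. gg d p j / real p ^ j) has_sum Ev d p) UNIV"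
  by (rule norm_summable_imp_has_sum[OF E_abs_summable[OF d p] E_sums[OF d p]])

lemma euler_finite:
  fixes \<gamma> :: "nat \<Rightarrow> nat \<Rightarrow> real"
  assumes fP: "finite P" and pP: "\<And>p. p \<in> P \<Longrightarrow> prime p" and g0: "\<And>p. \<gamma> p 0 = 1"
    and sm: "\<And>p. p \<in> P \<Longrightarrow> (\<lambda>j. norm (\<gamma> p j / real p ^ j)) summable_on UNIV"
  shows "infsum (\<lambda>k. mulf \<gamma> k / real k) {k. k > 0 \<and> prime_factors k \<subseteq> P}
       = (\<Prod>p\<in>P. infsum (\<lambda>j. \<gamma> p j / real p ^ j) UNIV)"
proof -
  have bij: "bij_betw (ppow P) (PiE P (\<lambda>_. UNIV)) {k. k > 0 \<and> prime_factors k \<subseteq> P}"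
    using ppow_bij[OF fP pP, of "\<lambda>_. UNIV"] by simp
  have "infsum (\<lambda>k. mulf \<gamma> k / real k) {k. k > 0 \<and> prime_factors k \<subseteq> P}
      = infsum (\<lambda>e. mulf \<gamma> (ppow P e) / real (ppow P e)) (PiE P (\<lambda>_. UNIV))"
    by (rule infsum_reindex_bij_betw[OF bij, symmetric])
  also have "\<dots> = infsum (\<lambda>e. \<Prod>p\<in>P. \<gamma> p (e p) / real p ^ e p) (PiE P (\<lambda>_. UNIV))"
  proof (rule infsum_cong)
    fix e
    have "real (ppow P e) = (\<Prod>p\<in>P. real p ^ e p)" by (simp add: ppow_def)
    then show "mulf \<gamma> (ppow P e) / real (ppow P e) = (\<Prod>p\<in>P. \<gamma> p (e p) / real p ^ e p)"
      using mulf_ppow[of P \<gamma> e, OF fP pP g0] by (simp add: prod_dividef)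
  qed
  also have "\<dots> = (\<Prod>p\<in>P. infsum (\<lambda>j. \<gamma> p j / real p ^ j) UNIV)"
    by (rule infsum_prod_PiE_abs[OF fP, of "\<lambda>p j. \<gamma> p j / real p ^ j" "\<lambda>_. UNIV"]) (use sm in auto)
  finally show ?thesis .
qed


definition Kset :: "nat \<Rightarrow> nat set" where
  "Kset n = {k. k > 0 \<and> prime_factors k \<subseteq> {p. prime p \<and> p < n}}"

lemma a_summable:
  assumes d: "d \<in> {1,2,3,4,7}"
  shows "summable (\<lambda>k. norm (mulf (gg d) k / real k))"
    "summable (\<lambda>k. mulf (gg d) k / real k)"
    "\<And>k. \<bar>mulf (gg d) k / real k\<bar> \<le> 100 * (1 / real k ^ 2)"
  using coef_summable[of "mulf (gg d)" 100] gk_bound[OF d] by auto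

lemma a_has_sum:
  assumes d: "d \<in> {1,2,3,4,7}"
  shows "((\<lambda>k. mulf (gg d) k / real k) has_sum (\<Sum>k. mulf (gg d) k / real k)) UNIV"
  by (rule norm_summable_imp_has_sum[OF a_summable(1)[OF d] summable_sums[OF a_summable(2)[OF d]]])

lemma inv_sq_has_sum_from:
  "((\<lambda>k. 1 / real k ^ 2) has_sum (\<Sum>i. 1 / real (i + m) ^ 2)) {m..}"
proof -
  have s: "summable (\<lambda>i. 1 / real (i + m) ^ 2)"
    using summable_ignore_initial_segment[OF summable_inv_sq] .
  have h: "((\<lambda>i. 1 / real (i + m) ^ 2) has_sum (\<Sum>i. 1 / real (i + m) ^ 2)) UNIV"
    by (rule norm_summable_imp_has_sum) (use s in \<open>auto simp: summable_sums\<close>)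
  have bij: "bij_betw (\<lambda>i. i + m) UNIV {m..}"
    by (rule bij_betwI[where g="\<lambda>k. k - m"]) auto
  show ?thesis
    using has_sum_reindex_bij_betw[OF bij, of "\<lambda>k. 1 / real k ^ 2"] h by simp
qed

lemma tail_bound:
  assumes d: "d \<in> {1,2,3,4,7}" and n: "n \<ge> 2"
  shows "\<bar>infsum (\<lambda>k. mulf (gg d) k / real k) (UNIV - Kset n)\<bar> \<le> 100 / (real n - 1)"
proof -
  let ?a = "\<lambda>k. mulf (gg d) k / real k"
  have hs: "(?a has_sum (\<Sum>k. ?a k)) UNIV" by (rule a_has_sum[OF d])
  have abs_sum: "(\<lambda>k. norm (?a k)) summable_on UNIV"
    using summable_on_UNIV_nonneg_real_iff[of "\<lambda>k. norm (?a k)"] a_summable(1)[OF d] by simp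
  have abs_sub: "(\<lambda>k. norm (?a k)) summable_on (UNIV - Kset n)"
    by (rule summable_on_subset_banach[OF abs_sum]) auto
  have "\<bar>infsum ?a (UNIV - Kset n)\<bar> \<le> infsum (\<lambda>k. norm (?a k)) (UNIV - Kset n)"
    using norm_infsum_bound[of ?a "UNIV - Kset n"] abs_sub by simp
  also have "\<dots> \<le> infsum (\<lambda>k. 100 * (1 / real k ^ 2)) {n..}"
  proof (rule infsum_mono_neutral[OF abs_sub])
    show "(\<lambda>k. 100 * (1 / real k ^ 2)) summable_on {n..}"
      using inv_sq_has_sum_from[of n] by (intro summable_on_cmult_right) (auto simp: has_sum_iff)
    show "norm (?a x) \<le> 100 * (1 / real x ^ 2)" for x using a_summable(3)[OF d, of x] by simp
    show "norm (?a x) \<le> 0" if x: "x \<in> (UNIV - Kset n) - {n..}" for x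
    proof -
      have "x = 0"
      proof (rule ccontr)
        assume "x \<noteq> 0"
        have xn: "x < n" using x by auto
        have "prime_factors x \<subseteq> {p. prime p \<and> p < n}"
        proof
          fix q assume q: "q \<in> prime_factors x"
          then have "prime q" "q dvd x" by (auto dest: in_prime_factors_imp_prime in_prime_factors_imp_dvd)
          then have "q \<le> x" using \<open>x \<noteq> 0\<close> by (auto intro: dvd_imp_le)
          then show "q \<in> {p. prime p \<and> p < n}" using \<open>prime q\<close> xn by auto
        qed
        then have "x \<in> Kset n" using \<open>x \<noteq> 0\<close> by (auto simp: Kset_def)
        then show False using x by simp
      qed
      then show ?thesis by simp
    qed
    show "0 \<le> 100 * (1 / real x ^ 2)" for x by simp
  qed
  also have "\<dots> = 100 * infsum (\<lambda>k. 1 / real k ^ 2) {n..}" by (rule infsum_cmult_right')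
  also have "infsum (\<lambda>k. 1 / real k ^ 2) {n..} = (\<Sum>i. 1 / real (i + Suc (n - 1)) ^ 2)"
    using inv_sq_has_sum_from[of n] n by (simp add: has_sum_iff)
  also have "\<dots> \<le> 1 / real (n - 1)" by (rule tail_inv_sq) (use n in auto)
  finally show ?thesis using n by (simp add: of_nat_diff)
qed


definition Pn :: "nat \<Rightarrow> nat set" where "Pn n = {p. prime p \<and> p < n}"

lemma Pn_finite: "finite (Pn n)" unfolding Pn_def by auto

lemma Kset_euler:
  assumes d: "d \<in> {1,2,3,4,7}"
  shows "infsum (\<lambda>k. mulf (gg d) k / real k) (Kset n) = (\<Prod>p\<in>Pn n. Ev d p)"
proof -
  have "infsum (\<lambda>k. mulf (gg d) k / real k) (Kset n) = (\<Prod>p\<in>Pn n. infsum (\<lambda>j. gg d p j / real p ^ j) UNIV)"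
    unfolding Kset_def Pn_def[symmetric]
  proof (rule euler_finite[OF Pn_finite])
    show "prime p" if "p \<in> Pn n" for p using that by (simp add: Pn_def)
    show "gg d p 0 = 1" for p by (rule gg0)
    show "(\<lambda>j. norm (gg d p j / real p ^ j)) summable_on UNIV" if "p \<in> Pn n" for p
      using summable_on_UNIV_nonneg_real_iff[of "\<lambda>j. norm (gg d p j / real p ^ j)"]
        E_abs_summable[OF d, of p] that by (simp add: Pn_def)
  qed
  also have "\<dots> = (\<Prod>p\<in>Pn n. Ev d p)"
    by (intro prod.cong refl infsumI E_has_sum[OF d]) (simp add: Pn_def)
  finally show ?thesis .
qed

lemma A_lim:
  assumes d: "d \<in> {1,2,3,4,7}"
  shows "(\<lambda>n. \<Prod>p\<in>Pn n. Ev d p) \<longlonglongrightarrow> (\<Sum>k. mulf (gg d) k / real k)"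
proof -
  let ?a = "\<lambda>k. mulf (gg d) k / real k"
  define A where "A = (\<Sum>k. ?a k)"
  have hs: "(?a has_sum A) UNIV" unfolding A_def by (rule a_has_sum[OF d])
  have sm: "?a summable_on S" for S
    using summable_on_subset_banach[of ?a UNIV S] hs by (auto simp: has_sum_iff)
  have eqA: "A = (\<Prod>p\<in>Pn n. Ev d p) + infsum ?a (UNIV - Kset n)" for n
  proof -
    have "A = infsum ?a (Kset n \<union> (UNIV - Kset n))" using hs by (simp add: has_sum_iff)
    also have "\<dots> = infsum ?a (Kset n) + infsum ?a (UNIV - Kset n)"
      by (rule infsum_Un_disjoint[OF sm sm]) auto
    finally show ?thesis using Kset_euler[OF d] by simp
  qed
  have "(\<lambda>n. (\<Prod>p\<in>Pn n. Ev d p) - A) \<longlonglongrightarrow> 0"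
  proof (rule Lim_null_comparison)
    show "\<forall>\<^sub>F n in sequentially. norm ((\<Prod>p\<in>Pn n. Ev d p) - A) \<le> 100 / (real n - 1)"
      using eventually_ge_at_top[of 2]
    proof eventually_elim
      case (elim n)
      have "norm ((\<Prod>p\<in>Pn n. Ev d p) - A) = \<bar>infsum ?a (UNIV - Kset n)\<bar>"
        using eqA[of n] by simp
      also have "\<dots> \<le> 100 / (real n - 1)" by (rule tail_bound[OF d elim])
      finally show ?case .
    qed
    show "(\<lambda>n. 100 / (real n - 1)) \<longlonglongrightarrow> 0" by real_asymp
  qed
  then show ?thesis unfolding A_def[symmetric] by (simp add: LIM_zero_iff)
qed


definition ER :: "nat \<Rightarrow> real" where "ER d = (\<Prod>p\<in>R_set d. eRv d p)"
definition c3 :: "nat \<Rightarrow> real" where "c3 d = (if d = 3 then 4/3 else 1)"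
definition QPo :: "nat \<Rightarrow> nat \<Rightarrow> real" where
  "QPo d n = (\<Prod>p\<in>Pn n \<inter> {p. p \<in> Q_set d \<and> odd p}. 1 / (1 - 1 / real p ^ 2))"

lemma prime_even_2: "prime (p::nat) \<Longrightarrow> even p \<Longrightarrow> p = 2"
  using prime_odd_nat[of p] prime_ge_2_nat[of p] by linarith

lemma prod_split:
  assumes d: "d \<in> {1,2,3,4,7}" and n: "n > 7"
  shows "(\<Prod>p\<in>Pn n. Ev d p) = ER d * c3 d * QPo d n"
proof -
  note RF = R_facts[OF d]
  have RP: "R_set d \<subseteq> Pn n" using d n by (auto simp: R_set_def Pn_def)
  have "(\<Prod>p\<in>Pn n. Ev d p) = (\<Prod>p\<in>R_set d. Ev d p) * (\<Prod>p\<in>Pn n - R_set d. Ev d p)"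
    using prod.subset_diff[OF RP Pn_finite] by (simp add: mult.commute)
  also have "(\<Prod>p\<in>R_set d. Ev d p) = ER d" unfolding ER_def Ev_def by simp
  also have "(\<Prod>p\<in>Pn n - R_set d. Ev d p) = (\<Prod>p\<in>Pn n \<inter> Q_set d. 1 / (1 - 1 / real p ^ 2))"
  proof (rule prod.mono_neutral_cong_right)
    show "finite (Pn n - R_set d)" using Pn_finite by auto
    show "Pn n \<inter> Q_set d \<subseteq> Pn n - R_set d" using RF(3) by auto
    show "\<forall>i\<in>Pn n - R_set d - Pn n \<inter> Q_set d. Ev d i = 1" by (auto simp: Ev_def)
    show "Ev d x = 1 / (1 - 1 / real x ^ 2)" if "x \<in> Pn n \<inter> Q_set d" for x
      using that RF(3) by (auto simp: Ev_def)
  qed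
  also have "(\<Prod>p\<in>Pn n \<inter> Q_set d. 1 / (1 - 1 / real p ^ 2)) = c3 d * QPo d n"
  proof (cases "d = 3")
    case True
    have eq: "Pn n \<inter> Q_set d = insert 2 (Pn n \<inter> {p. p \<in> Q_set d \<and> odd p})"
      using True n by (auto simp: Pn_def Q_set_def dest: prime_even_2)
    show ?thesis unfolding QPo_def c3_def eq using True Pn_finite by (subst prod.insert) auto
  next
    case False
    have "2 \<notin> Q_set d" using d False by (auto simp: Q_set_def)
    then have eq: "Pn n \<inter> Q_set d = Pn n \<inter> {p. p \<in> Q_set d \<and> odd p}"
      by (auto simp: Pn_def dest: prime_even_2)
    show ?thesis unfolding QPo_def c3_def eq using False by simp
  qed
  finally show ?thesis by (simp add: mult_ac)
qed

lemma ER_nz: "d \<in> {1,2,3,4,7} \<Longrightarrow> ER d \<noteq> 0"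
  by (auto simp: ER_def R_set_def eRv_def)

lemma QPo_ge1: "QPo d n \<ge> 1"
  unfolding QPo_def
proof (rule prod_ge_1)
  fix p assume "p \<in> Pn n \<inter> {p. p \<in> Q_set d \<and> odd p}"
  then have "p \<ge> 2" by (auto simp: Pn_def prime_ge_2_nat)
  then have "1 / real p ^ 2 > 0" "1 / real p ^ 2 < 1" by (auto simp: power_le_one_iff)
  then show "1 \<le> 1 / (1 - 1 / real p ^ 2)" by (simp add: field_simps)
qed

lemma QPo_lim:
  assumes d: "d \<in> {1,2,3,4,7}"
  shows "(\<lambda>n. QPo d n) \<longlonglongrightarrow> (\<Sum>k. mulf (gg d) k / real k) / (ER d * c3 d)"
proof -
  have nz: "ER d * c3 d \<noteq> 0" using ER_nz[OF d] by (simp add: c3_def)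
  have "(\<lambda>n. (\<Prod>p\<in>Pn n. Ev d p) / (ER d * c3 d)) \<longlonglongrightarrow> (\<Sum>k. mulf (gg d) k / real k) / (ER d * c3 d)"
    by (intro tendsto_divide A_lim[OF d] tendsto_const nz)
  moreover have "\<forall>\<^sub>F n in sequentially. (\<Prod>p\<in>Pn n. Ev d p) / (ER d * c3 d) = QPo d n"
    using eventually_gt_at_top[of 7] by eventually_elim (use prod_split[OF d] nz in simp)
  ultimately show ?thesis by (rule Lim_transform_eventually)
qed

lemma sqrt_prod: "sqrt (prod f A) = (\<Prod>x\<in>A. sqrt (f x))"
  by (induction A rule: infinite_finite_induct) (simp_all add: real_sqrt_mult)

lemma partial_g:
  "(\<Prod>i\<le>n. (if i \<in> Q_set d \<and> odd i then (1 - 1 / (real i)^2) powr (-1/2) else 1)) = sqrt (QPo d (Suc n))"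
proof -
  have "(\<Prod>i\<le>n. (if i \<in> Q_set d \<and> odd i then (1 - 1 / (real i)^2) powr (-1/2) else 1))
      = (\<Prod>i\<in>{i\<in>{..n}. i \<in> Q_set d \<and> odd i}. (1 - 1 / (real i)^2) powr (-1/2))"
    by (rule prod.inter_filter[symmetric]) simp
  also have "{i\<in>{..n}. i \<in> Q_set d \<and> odd i} = Pn (Suc n) \<inter> {p. p \<in> Q_set d \<and> odd p}"
    by (auto simp: Pn_def Q_set_def)
  also have "(\<Prod>i\<in>Pn (Suc n) \<inter> {p. p \<in> Q_set d \<and> odd p}. (1 - 1 / (real i)^2) powr (-1/2))
      = (\<Prod>i\<in>Pn (Suc n) \<inter> {p. p \<in> Q_set d \<and> odd p}. sqrt (1 / (1 - 1 / real i ^ 2)))"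
  proof (rule prod.cong[OF refl])
    fix i assume "i \<in> Pn (Suc n) \<inter> {p. p \<in> Q_set d \<and> odd p}"
    then have "i \<ge> 2" by (auto simp: Pn_def prime_ge_2_nat)
    then have pos: "1 - 1 / (real i)^2 > 0" by (auto simp: power_le_one_iff)
    have "(1 - 1 / (real i)^2) powr (-1/2) = (1 - 1 / (real i)^2) powr (- (1/2))" by simp
    also have "\<dots> = 1 / sqrt (1 - 1 / (real i)^2)"
      using pos by (simp add: powr_minus_divide powr_half_sqrt)
    also have "\<dots> = sqrt (1 / (1 - 1 / real i ^ 2))" by (simp add: real_sqrt_divide)
    finally show "(1 - 1 / (real i)^2) powr (-1/2) = sqrt (1 / (1 - 1 / real i ^ 2))" .
  qed
  also have "\<dots> = sqrt (QPo d (Suc n))" unfolding QPo_def sqrt_prod ..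
  finally show ?thesis .
qed

lemma g_const_val:
  assumes d: "d \<in> {1,2,3,4,7}"
  shows "g_const d = sqrt ((\<Sum>k. mulf (gg d) k / real k) / (ER d * c3 d))"
    "(\<Sum>k. mulf (gg d) k / real k) / (ER d * c3 d) \<ge> 1"
proof -
  define L where "L = (\<Sum>k. mulf (gg d) k / real k) / (ER d * c3 d)"
  have lim: "(\<lambda>n. QPo d (Suc n)) \<longlonglongrightarrow> L"
    unfolding L_def using QPo_lim[OF d] by (rule LIMSEQ_Suc)
  have L1: "L \<ge> 1" by (rule LIMSEQ_le_const[OF lim]) (use QPo_ge1 in auto)
  then show "(\<Sum>k. mulf (gg d) k / real k) / (ER d * c3 d) \<ge> 1" unfolding L_def .
  define f where "f i = (if i \<in> Q_set d \<and> odd i then (1 - 1 / (real i)^2) powr (-1/2) else 1)" for i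
  have "raw_has_prod f 0 (sqrt L)"
    unfolding raw_has_prod_def
  proof
    have "(\<lambda>n. \<Prod>i\<le>n. f (i + 0)) = (\<lambda>n. sqrt (QPo d (Suc n)))"
    proof (rule ext)
      fix n
      have "(\<Prod>i\<le>n. f (i + 0)) = (\<Prod>i\<le>n. f i)" by simp
      also have "\<dots> = sqrt (QPo d (Suc n))" unfolding f_def by (rule partial_g)
      finally show "(\<Prod>i\<le>n. f (i + 0)) = sqrt (QPo d (Suc n))" .
    qed
    then show "(\<lambda>n. \<Prod>i\<le>n. f (i + 0)) \<longlonglongrightarrow> sqrt L"
      using tendsto_real_sqrt[OF lim] by simp
    show "sqrt L \<noteq> 0" using L1 by simp
  qed
  then have "f has_prod sqrt L" by (simp add: has_prod_def)
  then have "prodinf f = sqrt L" by (rule has_prod_unique[symmetric])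
  then show "g_const d = sqrt ((\<Sum>k. mulf (gg d) k / real k) / (ER d * c3 d))"
    unfolding g_const_def f_def L_def by simp
qed


lemma asy: "\<epsilon> > 0 \<Longrightarrow> (\<lambda>H::nat. real H * (3 + ln (real H))) \<in> O(\<lambda>H. real H powr (1 + \<epsilon>))"
  by real_asymp

lemma tot: "totient 2 = 1" "totient 4 = 2" "totient 6 = 2" "totient 8 = 4" "totient 14 = 6"
proof -
  show "totient 2 = 1" using totient_prime[of 2] by simp
  show "totient 4 = 2" using totient_prime_power_Suc[of 2 1] by simp
  show "totient 8 = 4" using totient_prime_power_Suc[of 2 2] by simp
  show "totient 6 = 2" using totient_mult_coprime[of 2 3] totient_prime[of 2] totient_prime[of 3] by simp
  show "totient 14 = 6" using totient_mult_coprime[of 2 7] totient_prime[of 2] totient_prime[of 7] by simp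
qed

lemma tot2: "totient (Suc (Suc 0)) = Suc 0" using tot(1) by (simp add: numeral_2_eq_2)

lemma const_id:
  assumes d: "d \<in> {1,2,3,4,7}"
  shows "Cd d * ER d * c3 d = delta_const d ^ 2 * (2 * real d * L1 d / (pi * real (totient (2 * d))))"
  using d by (elim dcases) (simp_all add: Cd_def ER_def c3_def R_set_def Wm_def eRv_def c_const_def
      delta_const_def L1_def tot tot2 field_simps real_sqrt_mult[symmetric])


theorem theorem6p2:
  fixes d :: nat and \<epsilon> :: real
  assumes "d \<in> {1, 2, 3, 4, 7}" and "\<epsilon> > 0"
  shows "(\<forall>H::nat.
            (\<Sum>q\<in>{q \<in> {1..H} \<times> {1..H}. fst q \<noteq> snd q}.
               T_series d (nat \<bar>int (snd q) - int (fst q)\<bar>))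
          = 2 * (\<Sum>h = 1..H - 1. real (H - h) * T_series d h))
      \<and> (\<lambda>H::nat. (\<Sum>q\<in>{q \<in> {1..H} \<times> {1..H}. fst q \<noteq> snd q}.
               T_series d (nat \<bar>int (snd q) - int (fst q)\<bar>))
            - (beta_const d)^2 * (real H)^2)
          \<in> O(\<lambda>H. real H powr (1 + \<epsilon>))"
proof -
  note d = assms(1)
  define S where "S H = (\<Sum>q\<in>{q \<in> {1..H} \<times> {1..H}. fst q \<noteq> snd q}.
               T_series d (nat \<bar>int (snd q) - int (fst q)\<bar>))" for H :: nat
  have S_eq: "S H = 2 * (\<Sum>h = 1..H - 1. real (H - h) * T_series d h)" for H
    unfolding S_def by (rule pair_sum)
  define F where "F h = (\<Sum>k | k dvd h. mulf (gg d) k)" for h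
  define A where "A = (\<Sum>k. mulf (gg d) k / real k)"
  have S_F: "S H = Cd d * (2 * (\<Sum>h=1..H-1. real (H-h) * F h))" for H
  proof -
    have "(\<Sum>h = 1..H - 1. real (H - h) * T_series d h) = (\<Sum>h = 1..H - 1. Cd d * (real (H - h) * F h))"
      by (intro sum.cong refl) (auto simp: T_eq[OF d] F_def)
    then show ?thesis unfolding S_eq by (simp add: sum_distrib_left[symmetric])
  qed
  have Kpos: "2 * real d * L1 d / (pi * real (totient (2 * d))) \<ge> 0"
    using d by (elim dcases) (auto simp: L1_def)
  have beta: "(beta_const d)^2 = Cd d * A"
  proof -
    define L where "L = A / (ER d * c3 d)"
    define K where "K = 2 * real d * L1 d / (pi * real (totient (2 * d)))"
    have gL: "g_const d = sqrt L" "L \<ge> 1" using g_const_val[OF d] unfolding L_def A_def by auto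
    have "(beta_const d)^2 = delta_const d ^ 2 * (sqrt L)^2 * (sqrt K)^2"
      unfolding beta_const_def gL(1) K_def by (simp add: power_mult_distrib)
    also have "\<dots> = delta_const d ^ 2 * L * K" using gL(2) Kpos unfolding K_def by simp
    also have "\<dots> = (Cd d * ER d * c3 d) * L" unfolding K_def const_id[OF d] by simp
    also have "\<dots> = Cd d * A" unfolding L_def using ER_nz[OF d] by (simp add: c3_def)
    finally show ?thesis .
  qed
  define M where "M = \<bar>Cd d\<bar> * (\<bar>A\<bar> + 200)"
  have bound: "\<bar>S H - (beta_const d)^2 * (real H)^2\<bar> \<le> M * (real H * (3 + ln (real H)))"
    if H: "H \<ge> 1" for H
  proof -
    have fb: "\<bar>2 * (\<Sum>h=1..H-1. real (H-h) * F h) - A * real H ^ 2\<bar>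
        \<le> \<bar>A\<bar> * real H + 2 * 100 * real H * (2 + ln (real H))"
      unfolding F_def A_def by (rule final_bound[OF gk_bound[OF d] H])
    have "S H - (beta_const d)^2 * (real H)^2 = Cd d * (2 * (\<Sum>h=1..H-1. real (H-h) * F h) - A * real H ^ 2)"
      unfolding S_F beta by (simp add: algebra_simps)
    then have "\<bar>S H - (beta_const d)^2 * (real H)^2\<bar>
       = \<bar>Cd d\<bar> * \<bar>2 * (\<Sum>h=1..H-1. real (H-h) * F h) - A * real H ^ 2\<bar>" by (simp add: abs_mult)
    also have "\<dots> \<le> \<bar>Cd d\<bar> * (\<bar>A\<bar> * real H + 2 * 100 * real H * (2 + ln (real H)))"
      by (intro mult_left_mono fb) auto
    also have "\<bar>A\<bar> * real H + 2 * 100 * real H * (2 + ln (real H)) \<le> (\<bar>A\<bar> + 200) * (real H * (3 + ln (real H)))"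
    proof -
      have l: "ln (real H) \<ge> 0" using H by simp
      have "\<bar>A\<bar> * real H \<le> \<bar>A\<bar> * (real H * (3 + ln (real H)))"
        using l H by (intro mult_left_mono) (auto simp: mult_le_cancel_left1)
      moreover have "2 * 100 * real H * (2 + ln (real H)) \<le> 200 * (real H * (3 + ln (real H)))"
        using H by simp
      ultimately show ?thesis by (simp add: algebra_simps)
    qed
    then have "\<bar>Cd d\<bar> * (\<bar>A\<bar> * real H + 2 * 100 * real H * (2 + ln (real H)))
        \<le> \<bar>Cd d\<bar> * ((\<bar>A\<bar> + 200) * (real H * (3 + ln (real H))))" by (intro mult_left_mono) auto
    finally show ?thesis unfolding M_def by (simp add: mult_ac)
  qed
  have O1: "(\<lambda>H. S H - (beta_const d)^2 * (real H)^2) \<in> O(\<lambda>H::nat. real H * (3 + ln (real H)))"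
  proof (rule bigoI)
    show "\<forall>\<^sub>F H in at_top. norm (S H - (beta_const d)^2 * (real H)^2) \<le> M * norm (real H * (3 + ln (real H)))"
      using eventually_ge_at_top[of "1::nat"]
    proof eventually_elim
      case (elim H)
      have "norm (real H * (3 + ln (real H))) = real H * (3 + ln (real H))"
        using elim by (simp add: abs_mult)
      then show ?case using bound[OF elim] by simp
    qed
  qed
  have "(\<lambda>H. S H - (beta_const d)^2 * (real H)^2) \<in> O(\<lambda>H::nat. real H powr (1 + \<epsilon>))"
    by (rule landau_o.big_trans[OF O1 asy[OF assms(2)]])
  then show ?thesis using S_eq unfolding S_def by simp
qed


end
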